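(* Consider an environment $W$ containing a set of static sensors (closed disks at fixed positions) and a set of mobile sensors $ms_1,\ldots,ms_m$ with (possibly different) sensing radii, and let the covered area be the area of the part of $W$ covered by the union of all sensor disks. The greedy algorithm Greedy-HHP, which for $i=1,\ldots,m$ in turn moves mobile sensor $ms_i$ to the position (over the holes) that maximizes the covered area given the static sensors and the already placed mobile sensors $ms_1,\ldots,ms_{i-1}$, and then updates the holes, achieves an approximation ratio of $1/2$ for the problem of maximizing the covered area by moving the mobile sensors; i.e., the covered area it achieves is at least half of the maximum achievable covered area.
   Context: A hole is a maximal region of $W$ (outside obstacles, if any) not covered by any sensor disk. The hole healing problem asks to choose new positions for the mobile sensors so as to maximize the covered area of $W$ (equivalently, recover as much hole area as possible). *)

theory Defs
  imports "HOL-Analysis.Analysis"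
begin

type_synonym point = "real^2"

definition static_cover :: "(point \<times> real) set \<Rightarrow> point set" where
  "static_cover S = (\<Union>(c, s)\<in>S. cball c s)"

definition covered_area ::
  "point set \<Rightarrow> (point \<times> real) set \<Rightarrow> (nat \<Rightarrow> real) \<Rightarrow> (nat \<Rightarrow> point) \<Rightarrow> nat \<Rightarrow> real" where
  "covered_area W S r p k =
     measure lebesgue (W \<inter> (static_cover S \<union> (\<Union>i<k. cball (p i) (r i))))"

text \<open>Greedy-HHP output: for each i < m, the position g i of mobile sensor i is a candidate
  position maximizing the covered area given the static sensors and the already placed
  mobile sensors 0..i-1.\<close>
definition greedy_placement ::
  "point set \<Rightarrow> (point \<times> real) set \<Rightarrow> (nat \<Rightarrow> real) \<Rightarrow> point set \<Rightarrow> nat \<Rightarrow> (nat \<Rightarrow> point) \<Rightarrow> bool" where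
  "greedy_placement W S r C m g \<longleftrightarrow>
     (\<forall>i<m. g i \<in> C \<and>
        (\<forall>x\<in>C. covered_area W S r (g(i := x)) (Suc i) \<le> covered_area W S r g (Suc i)))"

end

theory Submission
  imports Defs
begin

definition cov :: "point set \<Rightarrow> (point \<times> real) set \<Rightarrow> (nat \<Rightarrow> real) \<Rightarrow> (nat \<Rightarrow> point) \<Rightarrow> nat \<Rightarrow> point set" where
  "cov W S r p k = W \<inter> (static_cover S \<union> (\<Union>i<k. cball (p i) (r i)))"

lemma closed_static: "finite S \<Longrightarrow> closed (static_cover S)"
  unfolding static_cover_def by (intro closed_UN) auto

lemma cov_lmeas:
  assumes "W \<in> sets lebesgue" "bounded W" "finite S"
  shows "cov W S r p k \<in> lmeasurable"
proof -
  have "closed (static_cover S \<union> (\<Union>i<k. cball (p i) (r i)))"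
    using closed_static[OF assms(3)] by (intro closed_Un closed_UN) auto
  hence "cov W S r p k \<in> sets lebesgue" unfolding cov_def
    using assms(1) by (intro sets.Int) (auto intro: borel_closed)
  moreover have "bounded (cov W S r p k)" unfolding cov_def using assms(2) bounded_subset by blast
  ultimately show ?thesis using bounded_set_imp_lmeasurable by blast
qed

lemma cov_Suc_upd: "cov W S r (g(i := x)) (Suc i) = cov W S r g i \<union> (W \<inter> cball x (r i))"
  unfolding cov_def lessThan_Suc by auto

theorem theorem2:
  fixes W :: "(real^2) set" and S :: "((real^2) \<times> real) set"
    and r :: "nat \<Rightarrow> real" and C :: "(real^2) set" and m :: nat
    and g :: "nat \<Rightarrow> real^2"
  assumes "W \<in> sets lebesgue" and "bounded W"
    and "finite S" and "\<forall>(c, s)\<in>S. s > 0"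
    and "\<forall>i<m. r i > 0"
    and "greedy_placement W S r C m g"
  shows "\<forall>p. (\<forall>i<m. p i \<in> C) \<longrightarrow>
           covered_area W S r g m \<ge> (1/2) * covered_area W S r p m"
proof (intro allI impI)
  fix p assume pC: "\<forall>i<m. p i \<in> C"
  have ca: "covered_area W S r q k = measure lebesgue (cov W S r q k)" for q k
    unfolding covered_area_def cov_def ..
  have L: "cov W S r q k \<in> lmeasurable" for q k using cov_lmeas assms(1-3) by blast
  define E where "E i = cov W S r g i" for i
  define D where "D i = W \<inter> cball (p i) (r i) - E i" for i
  have Dm: "D i \<in> sets lebesgue" for i
  proof -
    have "W \<inter> cball (p i) (r i) \<in> sets lebesgue" using assms(1) by auto
    thus ?thesis unfolding D_def E_def using L fmeasurableD by blast
  qed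
  have sub: "cov W S r p m \<subseteq> E m \<union> (\<Union>i<m. D i)"
  proof
    fix x assume x: "x \<in> cov W S r p m"
    show "x \<in> E m \<union> (\<Union>i<m. D i)"
    proof (cases "x \<in> static_cover S")
      case True thus ?thesis using x unfolding E_def cov_def by auto
    next
      case False
      then obtain i where i: "i < m" "x \<in> cball (p i) (r i)" "x \<in> W" using x unfolding cov_def by auto
      show ?thesis
      proof (cases "x \<in> E i")
        case True
        hence "x \<in> E m" using i(1) unfolding E_def cov_def by auto
        thus ?thesis by blast
      next
        case False thus ?thesis using i unfolding D_def by blast
      qed
    qed
  qed
  have step: "measure lebesgue (D i) \<le> measure lebesgue (E (Suc i)) - measure lebesgue (E i)" if "i < m" for i
  proof -
    have "measure lebesgue (cov W S r (g(i := p i)) (Suc i)) \<le> measure lebesgue (E (Suc i))"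
      using assms(6) pC that unfolding greedy_placement_def ca E_def by blast
    moreover have "W \<inter> cball (p i) (r i) \<in> lmeasurable"
      using assms(1,2) by (intro bounded_set_imp_lmeasurable) (auto intro: bounded_subset)
    hence "measure lebesgue (cov W S r (g(i := p i)) (Suc i)) = measure lebesgue (E i) + measure lebesgue (D i)"
      unfolding cov_Suc_upd D_def E_def using L by (intro measure_Un2) auto
    ultimately show ?thesis by simp
  qed
  have "measure lebesgue (cov W S r p m) \<le> measure lebesgue (E m \<union> (\<Union>i<m. D i))"
  proof (rule measure_mono_fmeasurable[OF sub])
    show "cov W S r p m \<in> sets lebesgue" using L fmeasurableD by blast
    have "E m \<union> (\<Union>i<m. D i) \<in> sets lebesgue" using L Dm fmeasurableD unfolding E_def by blast
    moreover have "bounded (E m \<union> (\<Union>i<m. D i))"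
      unfolding E_def D_def cov_def using assms(2) by (rule bounded_subset) auto
    ultimately show "E m \<union> (\<Union>i<m. D i) \<in> fmeasurable lebesgue"
      using bounded_set_imp_lmeasurable by blast
  qed
  also have "\<dots> \<le> measure lebesgue (E m) + measure lebesgue (\<Union>i<m. D i)"
    using L Dm unfolding E_def by (intro measure_Un_le) auto
  also have "measure lebesgue (\<Union>i<m. D i) \<le> (\<Sum>i<m. measure lebesgue (D i))"
    using Dm by (intro measure_UNION_le) auto
  also have "\<dots> \<le> (\<Sum>i<m. measure lebesgue (E (Suc i)) - measure lebesgue (E i))"
    using step by (intro sum_mono) auto
  also have "\<dots> = measure lebesgue (E m) - measure lebesgue (E 0)"
    by (rule sum_lessThan_telescope)
  finally have "measure lebesgue (cov W S r p m) \<le> 2 * measure lebesgue (E m)"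
    using measure_nonneg[of lebesgue "E 0"] by linarith
  thus "covered_area W S r g m \<ge> (1/2) * covered_area W S r p m"
    unfolding ca E_def by simp
qed

end
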